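(* Let $K\ge1$ be an integer and let $s:[0,\infty)\to\mathbb{R}$ be differentiable with $s(0)=s'(0)=0$, convex on $[0,K]$, and with $s(j)\neq0$ for some $j\in\{1,\dots,K\}$. Define $$\mathsf{Eff}_K=\frac{1}{K+1}\cdot\frac{\sum_{j=1}^K(K+1-j)\,s(j)^2}{\sum_{j=1}^K(K+1-j)\,s(j)},\qquad \mathsf{Eff}^{\mathrm{lb}}_k=\frac{1}{k+1}\,s\!\left(\frac{k+1}{2}\right),\ k\ge0.$$ Then $\mathsf{Eff}_K\ge\mathsf{Eff}^{\mathrm{lb}}_K$, and $k\mapsto\mathsf{Eff}^{\mathrm{lb}}_k$ is non-decreasing on $\{0,1,\dots,K\}$. *)

theory Defs
  imports "HOL-Analysis.Analysis"
begin

definition Eff :: "(real \<Rightarrow> real) \<Rightarrow> nat \<Rightarrow> real" where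
  "Eff s K = (1 / (real K + 1)) *
     ((\<Sum>j=1..K. (real K + 1 - real j) * (s (real j))^2) /
      (\<Sum>j=1..K. (real K + 1 - real j) * s (real j)))"

definition Eff_lb :: "(real \<Rightarrow> real) \<Rightarrow> nat \<Rightarrow> real" where
  "Eff_lb s k = (1 / (real k + 1)) * s ((real k + 1) / 2)"

end

theory Submission
  imports Defs
begin

lemma pair_ineq:
  fixes a b m j c :: real
  assumes "0 < j" "j \<le> c" "0 \<le> a" "a*c \<le> j*m" "2*m \<le> a+b" "0 \<le> m"
  shows "(2*c - j)*a*(a-m) + j*b*(b-m) \<ge> 0"
proof -
  have c0: "c > 0" using assms by linarith
  have "a*c \<le> m*c" using assms(4) assms(2) assms(6) by (smt (verit) mult_right_mono mult.commute)
  hence am: "a \<le> m" using c0 by simp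
  have b1: "b \<ge> 2*m - a" using assms by linarith
  have "b*(b-m) - (2*m-a)*(m-a) = (b - (2*m-a))*(b + (2*m-a) - m)" by (simp add: algebra_simps)
  also have "\<dots> \<ge> 0" using b1 am assms by (intro mult_nonneg_nonneg) auto
  finally have "j*(b*(b-m)) \<ge> j*((2*m-a)*(m-a))" using assms(1) by (intro mult_left_mono) auto
  moreover have "(2*c - j)*a*(a-m) + j*((2*m-a)*(m-a)) = (m-a)*(2*(j*m) - 2*(a*c))"
    by (simp add: algebra_simps)
  moreover have "(m-a)*(2*(j*m) - 2*(a*c)) \<ge> 0" using am assms(4) by (intro mult_nonneg_nonneg) auto
  ultimately show ?thesis by (simp add: algebra_simps)
qed

lemma chord:
  fixes s :: "real \<Rightarrow> real"
  assumes cv: "convex_on {0..L} s" and s0: "s 0 = 0" and "0 \<le> x" "x \<le> y" "y \<le> L" "0 < y"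
  shows "s x * y \<le> x * s y"
proof -
  define t where "t = x / y"
  have t: "0 \<le> t" "t \<le> 1" using assms by (auto simp: t_def)
  have "s ((1 - t) *\<^sub>R 0 + t *\<^sub>R y) \<le> (1 - t) * s 0 + t * s y"
    by (rule convex_onD[OF cv]) (use t assms in auto)
  moreover have "(1 - t) *\<^sub>R 0 + t *\<^sub>R y = x" using assms by (simp add: t_def)
  ultimately have "s x \<le> x / y * s y" using s0 by (simp add: t_def)
  thus ?thesis using assms by (simp add: field_simps)
qed

lemma midpt:
  fixes s :: "real \<Rightarrow> real"
  assumes cv: "convex_on {0..L} s" and "0 \<le> x" "x \<le> L" "0 \<le> y" "y \<le> L"
  shows "2 * s ((x+y)/2) \<le> s x + s y"
proof -
  have "s ((1 - 1/2) *\<^sub>R x + (1/2) *\<^sub>R y) \<le> (1 - 1/2) * s x + (1/2) * s y"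
    by (rule convex_onD[OF cv]) (use assms in auto)
  moreover have "(1 - 1/2) *\<^sub>R x + (1/2::real) *\<^sub>R y = (x+y)/2" by simp
  ultimately have "s ((x+y)/2) \<le> (1 - 1/2) * s x + (1/2) * s y" by metis
  thus ?thesis by simp
qed

lemma nonneg:
  fixes s :: "real \<Rightarrow> real"
  assumes cv: "convex_on {0..L} s" and s0: "s 0 = 0"
    and d: "(s has_real_derivative 0) (at 0 within {0..})"
    and x: "0 \<le> x" "x \<le> L"
  shows "s x \<ge> 0"
proof (rule ccontr)
  assume neg: "\<not> s x \<ge> 0"
  hence xp: "x > 0" using x s0 by (cases "x = 0") auto
  define q where "q = s x / x"
  have q: "q < 0" using neg xp by (simp add: q_def divide_neg_pos)
  have "((\<lambda>y. (s y - s 0) / (y - 0)) \<longlongrightarrow> 0) (at 0 within {0..})"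
    using d unfolding has_field_derivative_iff by simp
  hence lim: "((\<lambda>y. s y / y) \<longlongrightarrow> 0) (at 0 within {0..})" using s0 by simp
  have "eventually (\<lambda>y. dist (s y / y) 0 < -q) (at 0 within {0..})"
    by (rule tendstoD[OF lim]) (use q in linarith)
  then obtain e where e: "e > 0" "\<forall>y\<in>{0..}. y \<noteq> 0 \<and> dist y 0 < e \<longrightarrow> dist (s y / y) 0 < -q"
    unfolding eventually_at by blast
  define y where "y = min x (e/2)"
  have y: "0 < y" "y \<le> x" "y < e" using xp e by (auto simp: y_def)
  have "dist (s y / y) 0 < -q" using e(2) y by simp
  hence "\<bar>s y / y\<bar> < -q" by (simp add: dist_real_def)
  moreover have "s y * x \<le> y * s x" using chord[OF cv s0, of y x] y x by auto
  hence "s y / y \<le> q" using y xp by (simp add: q_def field_simps)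
  ultimately show False by linarith
qed

theorem mainTheorem5:
  fixes s :: "real \<Rightarrow> real" and K :: nat
  assumes "K \<ge> 1"
    and "\<forall>x\<ge>0. s differentiable (at x within {0..})"
    and "s 0 = 0"
    and "(s has_real_derivative 0) (at 0 within {0..})"
    and "convex_on {0..real K} s"
    and "\<exists>j\<in>{1..K}. s (real j) \<noteq> 0"
  shows "Eff s K \<ge> Eff_lb s K \<and>
         (\<forall>k1 k2. k1 \<le> k2 \<and> k2 \<le> K \<longrightarrow> Eff_lb s k1 \<le> Eff_lb s k2)"
proof
  note cv = assms(5) and s0 = assms(3) and d = assms(4)
  have nn: "\<And>x. 0 \<le> x \<Longrightarrow> x \<le> real K \<Longrightarrow> s x \<ge> 0" using nonneg[OF cv s0 d] by blast
  define c where "c = (real K + 1) / 2"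
  define m where "m = s c"
  have c: "c \<ge> 1" "c \<le> real K" using assms(1) by (auto simp: c_def)
  have m0: "m \<ge> 0" using nn c by (simp add: m_def)
  define w where "w = (\<lambda>j::nat. real K + 1 - real j)"
  define f where "f = (\<lambda>j::nat. w j * s (real j) * (s (real j) - m))"
  have pair: "f j + f (K + 1 - j) \<ge> 0" if j: "j \<in> {1..K}" for j
  proof -
    define j' where "j' = K + 1 - j"
    have rj': "real j' = 2*c - real j" using j by (auto simp: j'_def c_def of_nat_diff)
    have wj: "w j = 2*c - real j" "w j' = real j" using rj' unfolding w_def c_def by (auto simp: field_simps)
    have j'r: "1 \<le> j'" "j' \<le> K" using j by (auto simp: j'_def)
    have mid: "2*m \<le> s (real j) + s (real j')"
      using midpt[OF cv, of "real j" "real j'"] j j'r rj' by (auto simp: m_def)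
    show ?thesis
    proof (cases "real j \<le> c")
      case True
      have "s (real j) * c \<le> real j * m" using chord[OF cv s0, of "real j" c] True c j
        by (auto simp: m_def)
      from pair_ineq[OF _ True _ this mid m0] j nn[of "real j"]
      show ?thesis unfolding f_def j'_def[symmetric] wj by (simp add: mult.assoc)
    next
      case False
      hence le: "real j' \<le> c" using rj' by simp
      have "s (real j') * c \<le> real j' * m" using chord[OF cv s0, of "real j'" c] le c j'r
        by (auto simp: m_def)
      from pair_ineq[OF _ le _ this _ m0] j'r nn[of "real j'"] mid
      have "(2 * c - real j') * s (real j') * (s (real j') - m) + real j' * s (real j) * (s (real j) - m) \<ge> 0"
        by (simp add: add.commute)
      thus ?thesis unfolding f_def j'_def[symmetric] wj rj' by (simp add: mult.assoc algebra_simps)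
    qed
  qed
  have rev: "(\<Sum>j=1..K. f j) = (\<Sum>j=1..K. f (K + 1 - j))"
    using sum.atLeastAtMost_rev[of f 1 K] by (simp add: add.commute)
  have "2 * (\<Sum>j=1..K. f j) = (\<Sum>j=1..K. f j + f (K + 1 - j))"
    by (subst sum.distrib) (use rev in simp)
  also have "\<dots> \<ge> 0" using pair by (intro sum_nonneg) auto
  finally have F: "(\<Sum>j=1..K. f j) \<ge> 0" by simp
  define N where "N = (\<Sum>j=1..K. (real K + 1 - real j) * (s (real j))^2)"
  define D where "D = (\<Sum>j=1..K. (real K + 1 - real j) * s (real j))"
  have "(\<Sum>j=1..K. f j) = N - m * D"
    unfolding f_def N_def D_def w_def sum_distrib_left sum_subtractf[symmetric]
    by (intro sum.cong) (auto simp: algebra_simps power2_eq_square)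
  with F have ND: "m * D \<le> N" by simp
  from assms(6) obtain j0 where j0: "j0 \<in> {1..K}" "s (real j0) \<noteq> 0" by blast
  have "s (real j0) > 0" using nn[of "real j0"] j0 by force
  hence "(real K + 1 - real j0) * s (real j0) > 0" using j0 by auto
  moreover have "\<forall>j\<in>{1..K}. (real K + 1 - real j) * s (real j) \<ge> 0" using nn by auto
  ultimately have Dp: "D > 0" unfolding D_def
    by (intro sum_pos2[OF _ j0(1)]) auto
  have "m \<le> N / D" using ND Dp by (simp add: field_simps)
  hence "1 / (real K + 1) * m \<le> 1 / (real K + 1) * (N / D)" by (intro mult_left_mono) auto
  thus "Eff_lb s K \<le> Eff s K" unfolding Eff_def Eff_lb_def N_def[symmetric] D_def[symmetric]
    by (simp add: m_def c_def)
next
  note cv = assms(5) and s0 = assms(3)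
  show "\<forall>k1 k2. k1 \<le> k2 \<and> k2 \<le> K \<longrightarrow> Eff_lb s k1 \<le> Eff_lb s k2"
  proof (intro allI impI)
    fix k1 k2 assume k: "k1 \<le> k2 \<and> k2 \<le> K"
    define x where "x = (real k1 + 1) / 2"
    define y where "y = (real k2 + 1) / 2"
    have "y \<le> real K" using k assms(1) by (simp add: y_def)
    hence "s x * y \<le> x * s y" using chord[OF cv s0, of x y] k by (auto simp: x_def y_def)
    hence "s x / (2*x) \<le> s y / (2*y)" by (simp add: x_def y_def field_simps)
    thus "Eff_lb s k1 \<le> Eff_lb s k2" unfolding Eff_lb_def x_def y_def
      by (simp add: field_simps)
  qed
qed

end
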